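(* Let $V=\{v_1,\dots,v_m\}\subset\mathbb{R}^d$ be a finite set of $m$ points and let $r\in\mathbb{R}^d$. Let $\mathcal{B}(V,r)$ denote the poset, ordered by inclusion, of all weakly $r$-balanced subsets $S\subset V$ with $S\neq V$, and let $\overline{\mathcal{B}}(V,r)$ denote the poset, ordered by inclusion, of all $r$-balanced subsets $S\subset V$ with $S\neq V$. Suppose $\mathcal{B}(V,r)$ is nonempty, $r\in\mathrm{relint}(\mathrm{conv}(V))$, and the affine hull of $\mathrm{conv}(V)$ has dimension $k$. Then \[ \Delta\mathcal{B}(V,r)\simeq\Delta\overline{\mathcal{B}}(V,r)\simeq S^{m-k-2}, \] where $\simeq$ denotes homotopy equivalence.
   Context: A subset $S\subset V$ is called weakly $r$-balanced if $r\in\mathrm{conv}(S)$, and $r$-balanced if $r\in\mathrm{relint}(\mathrm{conv}(S))$ (relative interior taken within the affine hull of $S$). For a poset $\mathcal{P}$, $\Delta\mathcal{P}$ denotes its order complex (the simplicial complex of finite chains of $\mathcal{P}$). *)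

theory Defs
  imports "HOL-Analysis.Analysis"
begin

definition weakly_balanced_poset :: "('a::euclidean_space) set \<Rightarrow> 'a \<Rightarrow> 'a set set" where
  "weakly_balanced_poset V r = {S. S \<subseteq> V \<and> S \<noteq> V \<and> r \<in> convex hull S}"

definition balanced_poset :: "('a::euclidean_space) set \<Rightarrow> 'a \<Rightarrow> 'a set set" where
  "balanced_poset V r = {S. S \<subseteq> V \<and> S \<noteq> V \<and> r \<in> rel_interior (convex hull S)}"

text \<open>Geometric realization of the order complex of a finite family P of sets,
  ordered by inclusion: convex combinations of the vertices (elements of P) whose
  support is a chain, topologized as a subspace of the product topology on
  functions P-indexed to the reals (which for finite P is the Euclidean topology).\<close>
definition order_complex_realization :: "'b set set \<Rightarrow> ('b set \<Rightarrow> real) topology" where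
  "order_complex_realization P = subtopology (powertop_real UNIV)
     {f. (\<forall>x. 0 \<le> f x) \<and> (\<forall>x. x \<notin> P \<longrightarrow> f x = 0)
         \<and> (\<forall>x y. f x \<noteq> 0 \<and> f y \<noteq> 0 \<longrightarrow> x \<subseteq> y \<or> y \<subseteq> x)
         \<and> sum f P = 1}"

end

theory Submission
  imports Defs
begin

lemma relint_hull_iff:
  fixes S :: "'a::euclidean_space set"
  assumes "finite S"
  shows "r \<in> rel_interior (convex hull S) \<longleftrightarrow>
    (\<exists>u. (\<forall>x\<in>S. 0 < u x) \<and> sum u S = 1 \<and> (\<Sum>x\<in>S. u x *\<^sub>R x) = r)"
  using rel_interior_convex_hull_union [where S="\<lambda>x. {x}" and I=S] assms
  by auto

locale bal = fixes V :: "'a::euclidean_space set" and r :: 'a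
  assumes finV: "finite V"
begin

definition Cn where
  "Cn = {l. (\<forall>v. 0 \<le> l v) \<and> (\<forall>v. v \<notin> V \<longrightarrow> l v = 0) \<and> (\<Sum>v\<in>V. l v *\<^sub>R (v - r)) = 0}"

lemma sum_Vr: "(\<Sum>v\<in>V. l v *\<^sub>R (v - r)) = (\<Sum>v\<in>V. l v *\<^sub>R v) - sum l V *\<^sub>R r"
  by (simp add: scaleR_diff_right sum_subtractf scaleR_sum_left)

lemma Cn_sum_eq: "l \<in> Cn \<Longrightarrow> (\<Sum>v\<in>V. l v *\<^sub>R v) = sum l V *\<^sub>R r"
  unfolding Cn_def using sum_Vr[of l] by auto

lemma sum_restrict:
  fixes l :: "'a \<Rightarrow> real" and g :: "real \<Rightarrow> 'a \<Rightarrow> 'b::comm_monoid_add"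
  assumes "S \<subseteq> V" "\<And>v. v \<notin> S \<Longrightarrow> l v = 0"
  shows "(\<Sum>v\<in>V. g (l v) v) = (\<Sum>v\<in>S. g (l v) v) + (\<Sum>v\<in>V-S. g 0 v)"
proof -
  have "(\<Sum>v\<in>V. g (l v) v) = (\<Sum>v\<in>S. g (l v) v) + (\<Sum>v\<in>V-S. g (l v) v)"
    using sum.subset_diff[OF assms(1) finV] by (simp add: add.commute)
  also have "(\<Sum>v\<in>V-S. g (l v) v) = (\<Sum>v\<in>V-S. g 0 v)"
    using assms(2) by (intro sum.cong) auto
  finally show ?thesis .
qed

lemma sum_restrict0:
  fixes l :: "'a \<Rightarrow> real" and h :: "'a \<Rightarrow> 'b::real_vector"
  assumes "S \<subseteq> V" "\<And>v. v \<notin> S \<Longrightarrow> l v = 0"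
  shows "(\<Sum>v\<in>V. l v *\<^sub>R h v) = (\<Sum>v\<in>S. l v *\<^sub>R h v)" "sum l V = sum l S"
  using sum_restrict[OF assms, where g="\<lambda>a v. a *\<^sub>R h v"] sum_restrict[OF assms, where g="\<lambda>a v. a"] by auto

lemma bal_iff:
  assumes SV: "S \<subseteq> V"
  shows "r \<in> rel_interior (convex hull S) \<longleftrightarrow> (\<exists>l\<in>Cn. {v. l v \<noteq> 0} = S \<and> S \<noteq> {})"
proof -
  have finS: "finite S" using SV finV finite_subset by blast
  show ?thesis
  proof
    assume "r \<in> rel_interior (convex hull S)"
    then obtain u where u: "\<forall>x\<in>S. 0 < u x" "sum u S = 1" "(\<Sum>x\<in>S. u x *\<^sub>R x) = r"
      using relint_hull_iff[OF finS] by blast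
    define l where "l v = (if v \<in> S then u v else 0)" for v
    have l0: "\<And>v. v \<notin> S \<Longrightarrow> l v = 0" by (simp add: l_def)
    have "(\<Sum>v\<in>V. l v *\<^sub>R (v - r)) = (\<Sum>v\<in>S. l v *\<^sub>R (v - r))"
      using sum_restrict0(1)[OF SV l0] .
    also have "\<dots> = (\<Sum>v\<in>S. u v *\<^sub>R (v - r))" by (intro sum.cong) (auto simp: l_def)
    also have "\<dots> = 0" using u
      by (simp add: scaleR_diff_right sum_subtractf scaleR_sum_left[symmetric])
    finally have "l \<in> Cn" unfolding Cn_def using u SV by (auto simp: l_def less_imp_le)
    moreover have "{v. l v \<noteq> 0} = S" using u by (auto simp: l_def)
    moreover have "S \<noteq> {}" using u by auto
    ultimately show "\<exists>l\<in>Cn. {v. l v \<noteq> 0} = S \<and> S \<noteq> {}" by blast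
  next
    assume "\<exists>l\<in>Cn. {v. l v \<noteq> 0} = S \<and> S \<noteq> {}"
    then obtain l where l: "l \<in> Cn" "{v. l v \<noteq> 0} = S" "S \<noteq> {}" by blast
    have l0: "\<And>v. v \<notin> S \<Longrightarrow> l v = 0" using l by auto
    have lpos: "\<forall>x\<in>S. 0 < l x" using l unfolding Cn_def by (auto simp: order_less_le)
    define s where "s = sum l S"
    have spos: "s > 0" unfolding s_def using lpos finS l(3) by (simp add: sum_pos)
    have "(\<Sum>v\<in>S. l v *\<^sub>R v) = s *\<^sub>R r"
      using Cn_sum_eq[OF l(1)] sum_restrict0(1)[of S l "\<lambda>x. x", OF SV l0] sum_restrict0(2)[of S l, OF SV l0] by (simp add: s_def)
    moreover have "(\<Sum>x\<in>S. (l x / s) *\<^sub>R x) = (1/s) *\<^sub>R (\<Sum>x\<in>S. l x *\<^sub>R x)"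
      by (simp add: scaleR_sum_right divide_inverse mult.commute)
    ultimately have "(\<Sum>x\<in>S. (l x / s) *\<^sub>R x) = (1/s) *\<^sub>R (s *\<^sub>R r)"
      by metis
    then have "(\<Sum>x\<in>S. (l x / s) *\<^sub>R x) = r"
      using spos by simp
    moreover have "sum (\<lambda>x. l x / s) S = 1" using spos by (simp add: s_def sum_divide_distrib[symmetric])
    moreover have "\<forall>x\<in>S. 0 < l x / s" using lpos spos by simp
    ultimately have "\<exists>u. (\<forall>x\<in>S. 0 < u x) \<and> sum u S = 1 \<and> (\<Sum>x\<in>S. u x *\<^sub>R x) = r"
      by (intro exI[where x="\<lambda>x. l x / s"] conjI)
    then show "r \<in> rel_interior (convex hull S)" using relint_hull_iff[OF finS] by simp
  qed
qed

lemma wbal_iff: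
  assumes SV: "S \<subseteq> V"
  shows "r \<in> convex hull S \<longleftrightarrow> (\<exists>l\<in>Cn. (\<exists>v. l v \<noteq> 0) \<and> {v. l v \<noteq> 0} \<subseteq> S)"
proof -
  have finS: "finite S" using SV finV finite_subset by blast
  show ?thesis
  proof
    assume "r \<in> convex hull S"
    then obtain u where u: "\<forall>x\<in>S. 0 \<le> u x" "sum u S = 1" "(\<Sum>x\<in>S. u x *\<^sub>R x) = r"
      using convex_hull_finite[OF finS] by blast
    define l where "l v = (if v \<in> S then u v else 0)" for v
    have l0: "\<And>v. v \<notin> S \<Longrightarrow> l v = 0" by (simp add: l_def)
    have "(\<Sum>v\<in>V. l v *\<^sub>R (v - r)) = (\<Sum>v\<in>S. l v *\<^sub>R (v - r))"
      using sum_restrict0(1)[OF SV l0] .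
    also have "\<dots> = (\<Sum>v\<in>S. u v *\<^sub>R (v - r))" by (intro sum.cong) (auto simp: l_def)
    also have "\<dots> = 0" using u
      by (simp add: scaleR_diff_right sum_subtractf scaleR_sum_left[symmetric])
    finally have "l \<in> Cn" unfolding Cn_def using u SV by (auto simp: l_def)
    moreover have "{v. l v \<noteq> 0} \<subseteq> S" by (auto simp: l_def)
    moreover have "\<exists>v. l v \<noteq> 0"
    proof (rule ccontr)
      assume "\<not> (\<exists>v. l v \<noteq> 0)"
      then have "sum u S = 0" by (intro sum.neutral) (metis l_def)
      with u show False by simp
    qed
    ultimately show "\<exists>l\<in>Cn. (\<exists>v. l v \<noteq> 0) \<and> {v. l v \<noteq> 0} \<subseteq> S" by blast
  next
    assume "\<exists>l\<in>Cn. (\<exists>v. l v \<noteq> 0) \<and> {v. l v \<noteq> 0} \<subseteq> S"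
    then obtain l where l: "l \<in> Cn" "\<exists>v. l v \<noteq> 0" "{v. l v \<noteq> 0} \<subseteq> S" by blast
    have l0: "\<And>v. v \<notin> S \<Longrightarrow> l v = 0" using l by auto
    have lnn: "\<forall>x\<in>S. 0 \<le> l x" using l unfolding Cn_def by auto
    define s where "s = sum l S"
    obtain w where w: "l w \<noteq> 0" using l(2) by blast
    have "w \<in> S" using w l(3) by auto
    have spos: "s > 0" unfolding s_def
      using lnn finS w \<open>w \<in> S\<close> by (metis l(1) Cn_def mem_Collect_eq order_less_le sum_pos2)
    have "(\<Sum>v\<in>S. l v *\<^sub>R v) = s *\<^sub>R r"
      using Cn_sum_eq[OF l(1)] sum_restrict0(1)[of S l "\<lambda>x. x", OF SV l0] sum_restrict0(2)[of S l, OF SV l0] by (simp add: s_def)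
    moreover have "(\<Sum>x\<in>S. (l x / s) *\<^sub>R x) = (1/s) *\<^sub>R (\<Sum>x\<in>S. l x *\<^sub>R x)"
      by (simp add: scaleR_sum_right divide_inverse mult.commute)
    ultimately have "(\<Sum>x\<in>S. (l x / s) *\<^sub>R x) = (1/s) *\<^sub>R (s *\<^sub>R r)"
      by metis
    then have "(\<Sum>x\<in>S. (l x / s) *\<^sub>R x) = r"
      using spos by simp
    moreover have "sum (\<lambda>x. l x / s) S = 1" using spos by (simp add: s_def sum_divide_distrib[symmetric])
    moreover have "\<forall>x\<in>S. 0 \<le> l x / s" using lnn spos by simp
    ultimately have "\<exists>u. (\<forall>x\<in>S. 0 \<le> u x) \<and> sum u S = 1 \<and> (\<Sum>x\<in>S. u x *\<^sub>R x) = r"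
      by (intro exI[where x="\<lambda>x. l x / s"] conjI)
    then show "r \<in> convex hull S" by (simp add: convex_hull_finite[OF finS])
  qed
qed

end


definition chainfun :: "'b set set \<Rightarrow> ('b set \<Rightarrow> real) \<Rightarrow> bool" where
  "chainfun P g \<longleftrightarrow> (\<forall>x. 0 \<le> g x) \<and> (\<forall>x. x \<notin> P \<longrightarrow> g x = 0)
         \<and> (\<forall>x y. g x \<noteq> 0 \<and> g y \<noteq> 0 \<longrightarrow> x \<subseteq> y \<or> y \<subseteq> x)"

definition DeltaSet :: "'b set set \<Rightarrow> ('b set \<Rightarrow> real) set" where
  "DeltaSet P = {g. chainfun P g \<and> sum g P = 1}"

lemma ocr_eq: "order_complex_realization P = subtopology (powertop_real UNIV) (DeltaSet P)"
  unfolding order_complex_realization_def DeltaSet_def chainfun_def by (simp add: conj_assoc)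

lemma chain_top:
  assumes "finite F" "F \<noteq> {}" "\<And>x y. x \<in> F \<Longrightarrow> y \<in> F \<Longrightarrow> x \<subseteq> y \<or> y \<subseteq> x"
  shows "\<Union>F \<in> F"
  using assms
proof (induction F rule: finite_ne_induct)
  case (singleton x)
  then show ?case by simp
next
  case (insert x F)
  then have "\<Union>F \<in> F" by blast
  then have "x \<subseteq> \<Union>F \<or> \<Union>F \<subseteq> x" using insert by blast
  then show ?case using \<open>\<Union>F \<in> F\<close> by (auto simp: sup.absorb1 sup.absorb2)
qed

context bal begin

abbreviation "BB \<equiv> balanced_poset V r"
abbreviation "WB \<equiv> weakly_balanced_poset V r"

lemma finite_BB: "finite BB"
  by (rule finite_subset[of _ "Pow V"]) (auto simp: balanced_poset_def finV)

lemma finite_WB: "finite WB"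
  by (rule finite_subset[of _ "Pow V"]) (auto simp: weakly_balanced_poset_def finV)

lemma BB_sub_WB: "BB \<subseteq> WB"
  unfolding balanced_poset_def weakly_balanced_poset_def using rel_interior_subset by blast

lemma BB_nonempty: "S \<in> BB \<Longrightarrow> S \<noteq> {}"
  unfolding balanced_poset_def by auto

lemma BB_iff: "S \<in> BB \<longleftrightarrow> S \<subseteq> V \<and> S \<noteq> V \<and> (\<exists>l\<in>Cn. {v. l v \<noteq> 0} = S \<and> S \<noteq> {})"
  unfolding balanced_poset_def using bal_iff by auto

lemma WB_iff: "S \<in> WB \<longleftrightarrow> S \<subseteq> V \<and> S \<noteq> V \<and> (\<exists>l\<in>Cn. (\<exists>v. l v \<noteq> 0) \<and> {v. l v \<noteq> 0} \<subseteq> S)"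
  unfolding weakly_balanced_poset_def using wbal_iff by auto

lemma Cn_nonneg: "l \<in> Cn \<Longrightarrow> 0 \<le> l v"
  unfolding Cn_def by auto

lemma Cn_zero: "l \<in> Cn \<Longrightarrow> v \<notin> V \<Longrightarrow> l v = 0"
  unfolding Cn_def by auto

lemma Cn_eq: "l \<in> Cn \<Longrightarrow> (\<Sum>v\<in>V. l v *\<^sub>R (v - r)) = 0"
  unfolding Cn_def by auto

lemma supp_sub_V: "l \<in> Cn \<Longrightarrow> {v. l v \<noteq> 0} \<subseteq> V"
  using Cn_zero by blast

definition b :: "'a set \<Rightarrow> 'a \<Rightarrow> real" where
  "b S = (SOME l. l \<in> Cn \<and> {v. l v \<noteq> 0} = S \<and> sum l V = 1)"

lemma b_ex:
  assumes "S \<in> BB" shows "\<exists>l. l \<in> Cn \<and> {v. l v \<noteq> 0} = S \<and> sum l V = 1"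
proof -
  obtain l where l: "l \<in> Cn" "{v. l v \<noteq> 0} = S" "S \<noteq> {}" using assms BB_iff by blast
  have SV: "S \<subseteq> V" using assms BB_iff by blast
  obtain w where "w \<in> S" using l by blast
  then have "l w > 0" using l Cn_nonneg[OF l(1)] by (auto simp: order_less_le)
  moreover have "w \<in> V" using SV \<open>w \<in> S\<close> by blast
  ultimately have s: "sum l V > 0"
    using finV Cn_nonneg[OF l(1)] by (metis sum_pos2)
  define l' where "l' v = l v / sum l V" for v
  have "l' \<in> Cn" unfolding Cn_def l'_def using l(1) s
    by (auto simp: Cn_def scaleR_sum_right[symmetric] divide_inverse mult.commute[of _ "inverse _"]
        simp flip: scaleR_scaleR)
  moreover have "{v. l' v \<noteq> 0} = S" using l s by (auto simp: l'_def)
  moreover have "sum l' V = 1" using s by (simp add: l'_def sum_divide_distrib[symmetric])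
  ultimately show ?thesis by blast
qed

lemma b_props:
  assumes "S \<in> BB"
  shows "b S \<in> Cn" "{v. b S v \<noteq> 0} = S" "sum (b S) V = 1"
  using someI_ex[OF b_ex[OF assms]] unfolding b_def[symmetric] by auto

lemma b_pos: "S \<in> BB \<Longrightarrow> v \<in> S \<Longrightarrow> b S v > 0"
  using b_props[of S] Cn_nonneg[of "b S" v] by (auto simp: order_less_le)

lemma b_zero: "S \<in> BB \<Longrightarrow> v \<notin> S \<Longrightarrow> b S v = 0"
  using b_props[of S] by auto

definition Phi :: "('a set \<Rightarrow> real) \<Rightarrow> 'a \<Rightarrow> real" where
  "Phi g = (\<lambda>v. \<Sum>S\<in>BB. g S * b S v)"

lemma Phi_Cn:
  assumes "\<And>S. 0 \<le> g S" shows "Phi g \<in> Cn"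
proof -
  have "0 \<le> Phi g v" for v
    unfolding Phi_def using assms b_props(1) Cn_nonneg by (intro sum_nonneg) auto
  moreover have "Phi g v = 0" if "v \<notin> V" for v
    unfolding Phi_def using that b_props(1) Cn_zero by (intro sum.neutral) auto
  moreover have "(\<Sum>v\<in>V. Phi g v *\<^sub>R (v - r)) = 0"
  proof -
    have "(\<Sum>v\<in>V. Phi g v *\<^sub>R (v - r)) = (\<Sum>v\<in>V. \<Sum>S\<in>BB. g S *\<^sub>R (b S v *\<^sub>R (v - r)))"
      unfolding Phi_def by (simp add: scaleR_sum_left)
    also have "\<dots> = (\<Sum>S\<in>BB. g S *\<^sub>R (\<Sum>v\<in>V. b S v *\<^sub>R (v - r)))"
      by (subst sum.swap) (simp add: scaleR_sum_right)
    also have "\<dots> = 0" using b_props(1) Cn_eq by (intro sum.neutral) auto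
    finally show ?thesis .
  qed
  ultimately show ?thesis unfolding Cn_def by auto
qed

lemma Phi_supp:
  assumes "\<And>S. 0 \<le> g S" shows "Phi g v \<noteq> 0 \<longleftrightarrow> (\<exists>S\<in>BB. g S \<noteq> 0 \<and> v \<in> S)"
proof -
  have nn: "\<And>S. S \<in> BB \<Longrightarrow> 0 \<le> g S * b S v"
    using assms b_props(1) Cn_nonneg by auto
  have "Phi g v = 0 \<longleftrightarrow> (\<forall>S\<in>BB. g S * b S v = 0)"
    unfolding Phi_def using sum_nonneg_eq_0_iff[OF finite_BB nn] by simp
  moreover have "S \<in> BB \<Longrightarrow> g S * b S v = 0 \<longleftrightarrow> g S = 0 \<or> v \<notin> S" for S
    using b_pos b_zero by (metis less_irrefl mult_eq_0_iff)
  ultimately show ?thesis by auto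
qed

lemma Phi_sum: "sum (Phi g) V = sum g BB"
proof -
  have "sum (Phi g) V = (\<Sum>S\<in>BB. g S * sum (b S) V)"
    unfolding Phi_def by (subst sum.swap) (simp add: sum_distrib_left)
  also have "\<dots> = sum g BB" using b_props(3) by simp
  finally show ?thesis .
qed

lemma Phi_upd:
  assumes "S \<in> BB" "g S = 0"
  shows "Phi (\<lambda>T. if T = S then t else g T) v = Phi g v + t * b S v"
proof -
  have "Phi (\<lambda>T. if T = S then t else g T) v = t * b S v + (\<Sum>T\<in>BB-{S}. g T * b T v)"
  proof -
    have "(\<Sum>T\<in>BB-{S}. (if T = S then t else g T) * b T v) = (\<Sum>T\<in>BB-{S}. g T * b T v)"
      by (intro sum.cong) auto
    then show ?thesis
      unfolding Phi_def using sum.remove[OF finite_BB assms(1), of "\<lambda>T. (if T = S then t else g T) * b T v"]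
      by simp
  qed
  moreover have "Phi g v = g S * b S v + (\<Sum>T\<in>BB-{S}. g T * b T v)"
    unfolding Phi_def using sum.remove[OF finite_BB assms(1)] by simp
  ultimately show ?thesis using assms by simp
qed

end


context bal begin

lemma ex_decomp:
  "l \<in> Cn \<Longrightarrow> {v. l v \<noteq> 0} \<noteq> V \<Longrightarrow> \<exists>g. chainfun BB g \<and> Phi g = l"
proof (induction "card {v. l v \<noteq> 0}" arbitrary: l rule: less_induct)
  case less
  define S where "S = {v. l v \<noteq> 0}"
  have SV: "S \<subseteq> V" using supp_sub_V[OF less.prems(1)] by (simp add: S_def)
  have finS: "finite S" using SV finV finite_subset by blast
  show ?case
  proof (cases "S = {}")
    case True
    then have "Phi (\<lambda>_. 0) = l" by (auto simp: Phi_def S_def)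
    moreover have "chainfun BB (\<lambda>_. 0)" by (simp add: chainfun_def)
    ultimately show ?thesis by blast
  next
    case False
    have SBB: "S \<in> BB" using BB_iff SV less.prems False S_def by blast
    have lpos: "v \<in> S \<Longrightarrow> l v > 0" for v
      using Cn_nonneg[OF less.prems(1), of v] by (auto simp: S_def order_less_le)
    define R where "R = (\<lambda>v. l v / b S v) ` S"
    define t where "t = Min R"
    have finR: "finite R" "R \<noteq> {}" using finS False by (auto simp: R_def)
    have tle: "v \<in> S \<Longrightarrow> t \<le> l v / b S v" for v
      unfolding t_def R_def using finR by (intro Min_le) (auto simp: R_def)
    obtain w where w: "w \<in> S" "t = l w / b S w"
      using Min_in[OF finR] unfolding t_def R_def by auto
    have tpos: "t > 0" using w lpos b_pos[OF SBB] by simp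
    define l' where "l' v = l v - t * b S v" for v
    have l'nn: "0 \<le> l' v" for v
    proof (cases "v \<in> S")
      case True
      then show ?thesis using tle[OF True] b_pos[OF SBB True] by (simp add: l'_def field_simps)
    next
      case False
      then show ?thesis using b_zero[OF SBB False] by (simp add: l'_def S_def)
    qed
    have "l' \<in> Cn"
    proof -
      have "(\<Sum>v\<in>V. l' v *\<^sub>R (v - r)) = (\<Sum>v\<in>V. l v *\<^sub>R (v - r)) - t *\<^sub>R (\<Sum>v\<in>V. b S v *\<^sub>R (v - r))"
        by (simp add: l'_def scaleR_diff_left sum_subtractf scaleR_sum_right)
      also have "\<dots> = 0" using Cn_eq[OF less.prems(1)] Cn_eq[OF b_props(1)[OF SBB]] by simp
      finally show ?thesis unfolding Cn_def using l'nn Cn_zero[OF less.prems(1)] Cn_zero[OF b_props(1)[OF SBB]]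
        by (auto simp: l'_def)
    qed
    have "l' w = 0" using w b_pos[OF SBB w(1)] by (simp add: l'_def)
    have supp': "{v. l' v \<noteq> 0} \<subseteq> S - {w}"
    proof
      fix v assume v: "v \<in> {v. l' v \<noteq> 0}"
      have "v \<in> S"
      proof (rule ccontr)
        assume "v \<notin> S"
        then have "l v = 0" "b S v = 0" using b_zero[OF SBB] unfolding S_def by auto
        then show False using v by (simp add: l'_def)
      qed
      moreover have "v \<noteq> w" using v \<open>l' w = 0\<close> by auto
      ultimately show "v \<in> S - {w}" by blast
    qed
    then have cl: "card {v. l' v \<noteq> 0} < card {v. l v \<noteq> 0}"
      using finS w(1) unfolding S_def[symmetric] by (meson card_Diff1_less card_mono finite_Diff le_less_trans)
    have ne: "{v. l' v \<noteq> 0} \<noteq> V" using supp' SV w(1) by blast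
    have "\<exists>g. chainfun BB g \<and> Phi g = l'" by (rule less.hyps[OF cl \<open>l' \<in> Cn\<close> ne])
    then obtain g' where g'0: "chainfun BB g' \<and> Phi g' = l'" by (elim exE)
    note g' = conjunct1[OF g'0] conjunct2[OF g'0]
    have g'nn: "\<And>T. 0 \<le> g' T" using g'(1) unfolding chainfun_def by blast
    have sub: "g' T \<noteq> 0 \<Longrightarrow> T \<subseteq> {v. l' v \<noteq> 0}" for T
    proof -
      assume "g' T \<noteq> 0"
      moreover have "T \<in> BB" using g'(1) \<open>g' T \<noteq> 0\<close> unfolding chainfun_def by blast
      ultimately show ?thesis
      proof (intro subsetI)
        fix v assume "g' T \<noteq> 0" "T \<in> BB" "v \<in> T"
        then have "Phi g' v \<noteq> 0" using Phi_supp[of g' v, OF g'nn] by blast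
        then show "v \<in> {v. l' v \<noteq> 0}" using g'(2) by simp
      qed
    qed
    have g'S: "g' S = 0" using sub[of S] supp' w(1) by blast
    define g where "g T = (if T = S then t else g' T)" for T
    have "chainfun BB g"
      unfolding chainfun_def g_def
    proof (intro conjI allI impI)
      fix x show "0 \<le> (if x = S then t else g' x)" using tpos g'nn by simp
    next
      fix x assume "x \<notin> BB" then show "(if x = S then t else g' x) = 0"
        using SBB g'(1) unfolding chainfun_def by auto
    next
      fix x y assume *: "(if x = S then t else g' x) \<noteq> 0 \<and> (if y = S then t else g' y) \<noteq> 0"
      show "x \<subseteq> y \<or> y \<subseteq> x"
      proof (cases "x = S \<or> y = S")
        case True
        then show ?thesis using * sub supp' by (auto split: if_splits)
      next
        case False
        then show ?thesis using * g'(1) unfolding chainfun_def by auto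
      qed
    qed
    moreover have "Phi g = l"
    proof
      fix v
      have "Phi g v = Phi g' v + t * b S v"
        unfolding g_def by (rule Phi_upd[of S g' t v, OF SBB g'S])
      then show "Phi g v = l v" using g'(2) by (simp add: l'_def)
    qed
    ultimately show ?thesis by blast
  qed
qed

lemma chainfun_nn: "chainfun P g \<Longrightarrow> 0 \<le> g S"
  unfolding chainfun_def by simp

lemma chainfun_in: "chainfun P g \<Longrightarrow> g S \<noteq> 0 \<Longrightarrow> S \<in> P"
  unfolding chainfun_def by metis

lemma chainfun_cmp: "chainfun P g \<Longrightarrow> g S \<noteq> 0 \<Longrightarrow> g T \<noteq> 0 \<Longrightarrow> S \<subseteq> T \<or> T \<subseteq> S"
  unfolding chainfun_def by metis

lemma chainfun_del: "chainfun P g \<Longrightarrow> chainfun P (\<lambda>T. if T = S then 0 else g T)"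
  unfolding chainfun_def by auto

lemma chainfun_supp_finite: "finite P \<Longrightarrow> chainfun P g \<Longrightarrow> finite {S. g S \<noteq> 0}"
  by (rule finite_subset[of _ P]) (auto dest: chainfun_in)

lemma chainfun_top:
  assumes "finite P" "chainfun P g" "{S. g S \<noteq> 0} \<noteq> {}"
  shows "\<Union>{S. g S \<noteq> 0} \<in> {S. g S \<noteq> 0}"
proof (rule chain_top)
  show "finite {S. g S \<noteq> 0}" by (rule chainfun_supp_finite[OF assms(1,2)])
  show "{S. g S \<noteq> 0} \<noteq> {}" by (rule assms(3))
  fix x y assume "x \<in> {S. g S \<noteq> 0}" "y \<in> {S. g S \<noteq> 0}"
  then show "x \<subseteq> y \<or> y \<subseteq> x" using chainfun_cmp[OF assms(2)] by simp
qed

lemma Phi_supp_eq: "chainfun BB g \<Longrightarrow> {v. Phi g v \<noteq> 0} = \<Union>{S. g S \<noteq> 0}"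
proof -
  assume g: "chainfun BB g"
  have "Phi g v \<noteq> 0 \<longleftrightarrow> (\<exists>S\<in>BB. g S \<noteq> 0 \<and> v \<in> S)" for v
    by (rule Phi_supp) (rule chainfun_nn[OF g])
  then show ?thesis using chainfun_in[OF g] by blast
qed

lemma top_split:
  assumes g: "chainfun BB g" and S: "S = \<Union>{T. g T \<noteq> 0}" "g S \<noteq> 0"
  shows "\<exists>w\<in>S. Phi (\<lambda>T. if T = S then 0 else g T) w = 0"
proof -
  define g1 where "g1 = (\<lambda>T. if T = S then 0 else g T)"
  have g1: "chainfun BB g1" unfolding g1_def by (rule chainfun_del[OF g])
  have SBB: "S \<in> BB" using chainfun_in[OF g S(2)] .
  show ?thesis
  proof (cases "{T. g1 T \<noteq> 0} = {}")
    case True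
    then have "Phi g1 v = 0" for v using Phi_supp_eq[OF g1] by auto
    moreover obtain w where "w \<in> S" using BB_nonempty[OF SBB] by blast
    ultimately show ?thesis unfolding g1_def by blast
  next
    case False
    define T0 where "T0 = \<Union>{T. g1 T \<noteq> 0}"
    have T0: "g1 T0 \<noteq> 0" using chainfun_top[OF finite_BB g1 False] by (simp add: T0_def)
    then have "T0 \<noteq> S" "g T0 \<noteq> 0" by (auto simp: g1_def split: if_splits)
    then have "T0 \<subseteq> S" using S(1) by blast
    with \<open>T0 \<noteq> S\<close> obtain w where w: "w \<in> S" "w \<notin> T0" by blast
    have "Phi g1 w = 0" using Phi_supp_eq[OF g1] w(2) unfolding T0_def by blast
    then show ?thesis using w(1) unfolding g1_def by blast
  qed
qed

lemma uniq_decomp: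
  "chainfun BB g \<Longrightarrow> chainfun BB g' \<Longrightarrow> Phi g = Phi g' \<Longrightarrow> g = g'"
proof (induction "card {S. g S \<noteq> 0}" arbitrary: g g' rule: less_induct)
  case less
  have g: "chainfun BB g" and g': "chainfun BB g'" using less.prems by auto
  define G where "G = {S. g S \<noteq> 0}"
  define G' where "G' = {S. g' S \<noteq> 0}"
  have UG: "\<Union>G = \<Union>G'" using Phi_supp_eq[OF g] Phi_supp_eq[OF g'] less.prems(3)
    unfolding G_def G'_def by simp
  show ?case
  proof (cases "G = {}")
    case True
    have "G' = {}"
    proof (rule ccontr)
      assume "G' \<noteq> {}"
      then obtain S where "S \<in> G'" by blast
      then have "S \<in> BB" using chainfun_in[OF g'] by (auto simp: G'_def)
      then obtain v where "v \<in> S" using BB_nonempty by blast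
      then show False using UG True \<open>S \<in> G'\<close> by blast
    qed
    then show ?thesis using True by (auto simp: G_def G'_def)
  next
    case False
    define S where "S = \<Union>G"
    have gS: "g S \<noteq> 0" using chainfun_top[OF finite_BB g] False by (simp add: S_def G_def)
    have SBB: "S \<in> BB" by (rule chainfun_in[OF g gS])
    have "G' \<noteq> {}"
    proof
      assume "G' = {}"
      then have "S = {}" using UG S_def by simp
      then show False using BB_nonempty[OF SBB] by simp
    qed
    then have g'S: "g' S \<noteq> 0" using chainfun_top[OF finite_BB g'] UG by (simp add: S_def G'_def)
    define g1 where "g1 = (\<lambda>T. if T = S then 0 else g T)"
    define g1' where "g1' = (\<lambda>T. if T = S then 0 else g' T)"
    have c1: "chainfun BB g1" "chainfun BB g1'" unfolding g1_def g1'_def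
      by (rule chainfun_del[OF g], rule chainfun_del[OF g'])
    have geq: "g = (\<lambda>T. if T = S then g S else g1 T)" "g' = (\<lambda>T. if T = S then g' S else g1' T)"
      by (auto simp: g1_def g1'_def)
    have P1: "Phi g v = Phi g1 v + g S * b S v" for v
      by (subst geq(1)) (rule Phi_upd[of S g1 "g S" v, OF SBB], simp add: g1_def)
    have P2: "Phi g' v = Phi g1' v + g' S * b S v" for v
      by (subst geq(2)) (rule Phi_upd[of S g1' "g' S" v, OF SBB], simp add: g1'_def)
    have nn1: "0 \<le> Phi g1 v" "0 \<le> Phi g1' v" for v
      using Phi_Cn[OF chainfun_nn[OF c1(1)]] Phi_Cn[OF chainfun_nn[OF c1(2)]] Cn_nonneg by auto
    obtain w where w: "w \<in> S" "Phi g1 w = 0"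
      using top_split[OF g _ gS] S_def G_def unfolding g1_def by blast
    obtain w' where w': "w' \<in> S" "Phi g1' w' = 0"
      using top_split[OF g' _ g'S] S_def UG G'_def unfolding g1'_def by blast
    have bw: "b S w > 0" "b S w' > 0" using b_pos[OF SBB] w w' by auto
    have "g' S * b S w \<le> g S * b S w"
      using P1[of w] P2[of w] nn1(2)[of w] w(2) less.prems(3) by simp
    then have le1: "g' S \<le> g S" using bw(1) by simp
    have "g S * b S w' \<le> g' S * b S w'"
      using P1[of w'] P2[of w'] nn1(1)[of w'] w'(2) less.prems(3) by simp
    then have le2: "g S \<le> g' S" using bw(2) by simp
    have tt: "g S = g' S" using le1 le2 by simp
    have "Phi g1 = Phi g1'"
    proof
      fix v show "Phi g1 v = Phi g1' v" using P1[of v] P2[of v] tt less.prems(3) by simp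
    qed
    moreover have "card {T. g1 T \<noteq> 0} < card {S. g S \<noteq> 0}"
    proof -
      have "{T. g1 T \<noteq> 0} = G - {S}" by (auto simp: g1_def G_def)
      moreover have "S \<in> G" using gS by (simp add: G_def)
      moreover have "finite G" unfolding G_def by (rule chainfun_supp_finite[OF finite_BB g])
      ultimately show ?thesis unfolding G_def[symmetric] by (metis card_Diff1_less)
    qed
    ultimately have "g1 = g1'" using less.hyps c1 by blast
    then show ?thesis using geq tt by metis
  qed
qed

end


lemma closedin_all:
  assumes "\<And>i. closedin X {x \<in> topspace X. P i x}"
  shows "closedin X {x \<in> topspace X. \<forall>i. P i x}"
proof -
  have eq: "{x \<in> topspace X. \<forall>i. P i x} = topspace X \<inter> \<Inter>(range (\<lambda>i. {x \<in> topspace X. P i x}))"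
    by auto
  show ?thesis unfolding eq
    by (intro closedin_Int closedin_topspace closedin_Inter) (use assms in auto)
qed

lemma cproj: "continuous_map (powertop_real UNIV) euclideanreal (\<lambda>g. g x)"
  using continuous_map_product_projection[of x UNIV "\<lambda>_. euclideanreal"] by simp

lemma cproj_sub: "continuous_map (subtopology (powertop_real UNIV) D) euclideanreal (\<lambda>g. g x)"
  by (rule continuous_map_from_subtopology[OF cproj])

lemma closedin_pre:
  assumes "continuous_map (powertop_real UNIV) euclideanreal f" "closed C"
  shows "closedin (powertop_real UNIV) {g. f g \<in> C}"
proof -
  have "closedin euclideanreal C" using assms(2) by simp
  then have "closedin (powertop_real UNIV) {g \<in> topspace (powertop_real UNIV). f g \<in> C}"
    by (rule closedin_continuous_map_preimage[OF assms(1)])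
  then show ?thesis by simp
qed

lemma closedin_DeltaSet:
  assumes "finite P"
  shows "closedin (powertop_real UNIV) (DeltaSet P)"
proof -
  let ?X = "powertop_real UNIV :: ('b set \<Rightarrow> real) topology"
  have c1: "closedin ?X {g \<in> topspace ?X. \<forall>x. 0 \<le> g x}"
    by (rule closedin_all) (use closedin_pre[OF cproj closed_real_atLeast] in simp)
  have c2: "closedin ?X {g \<in> topspace ?X. \<forall>x. (x \<notin> P \<longrightarrow> g x = 0)}"
  proof (rule closedin_all)
    fix x
    show "closedin ?X {g \<in> topspace ?X. x \<notin> P \<longrightarrow> g x = 0}"
    proof (cases "x \<in> P")
      case True then show ?thesis using closedin_topspace[of "powertop_real UNIV"] by simp
    next
      case False then show ?thesis using closedin_pre[OF cproj[of x] closed_singleton[of 0]] by simp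
    qed
  qed
  have c3: "closedin ?X {g \<in> topspace ?X. \<forall>xy. (g (fst xy) \<noteq> 0 \<and> g (snd xy) \<noteq> 0 \<longrightarrow> fst xy \<subseteq> snd xy \<or> snd xy \<subseteq> fst xy)}"
  proof (rule closedin_all)
    fix xy :: "'b set \<times> 'b set"
    obtain x y where xy: "xy = (x, y)" by fastforce
    show "closedin ?X {g \<in> topspace ?X. (g (fst xy) \<noteq> 0 \<and> g (snd xy) \<noteq> 0 \<longrightarrow> fst xy \<subseteq> snd xy \<or> snd xy \<subseteq> fst xy)}"
    proof (cases "x \<subseteq> y \<or> y \<subseteq> x")
      case True then show ?thesis using xy closedin_topspace[of "powertop_real UNIV"] by auto
    next
      case False
      have "{g \<in> topspace ?X. (g (fst xy) \<noteq> 0 \<and> g (snd xy) \<noteq> 0 \<longrightarrow> fst xy \<subseteq> snd xy \<or> snd xy \<subseteq> fst xy)}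
          = {g. g x \<in> {0}} \<union> {g. g y \<in> {0}}" using False xy by auto
      then show ?thesis
        using closedin_pre[OF cproj[of x] closed_singleton[of 0]] closedin_pre[OF cproj[of y] closed_singleton[of 0]]
        by (simp add: closedin_Un)
    qed
  qed
  have c4: "closedin ?X {g. sum g P \<in> {1}}"
    by (rule closedin_pre[OF _ closed_singleton]) (intro continuous_map_sum assms cproj)
  have "DeltaSet P = {g \<in> topspace ?X. \<forall>x. 0 \<le> g x} \<inter> {g \<in> topspace ?X. \<forall>x. (x \<notin> P \<longrightarrow> g x = 0)}
      \<inter> {g \<in> topspace ?X. \<forall>xy. (g (fst xy) \<noteq> 0 \<and> g (snd xy) \<noteq> 0 \<longrightarrow> fst xy \<subseteq> snd xy \<or> snd xy \<subseteq> fst xy)}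
      \<inter> {g. sum g P \<in> {1}}"
    unfolding DeltaSet_def chainfun_def by auto
  then show ?thesis using c1 c2 c3 c4 by (simp only:) (intro closedin_Int)
qed

lemma compact_DeltaSet:
  assumes "finite P"
  shows "compact_space (subtopology (powertop_real UNIV) (DeltaSet P))"
proof -
  let ?K = "PiE UNIV (\<lambda>x. if x \<in> P then {0..1} else {0::real})"
  have "compactin (powertop_real UNIV) ?K"
    by (subst compactin_PiE) auto
  moreover have "DeltaSet P \<subseteq> ?K"
  proof
    fix g assume g: "g \<in> DeltaSet P"
    have "g x \<le> 1" if "x \<in> P" for x
    proof -
      have "g x \<le> sum g P"
        by (rule member_le_sum) (use g that in \<open>auto simp: DeltaSet_def chainfun_def assms\<close>)
      then show ?thesis using g by (simp add: DeltaSet_def)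
    qed
    then show "g \<in> ?K" using g by (auto simp: DeltaSet_def chainfun_def)
  qed
  ultimately have "compactin (powertop_real UNIV) (DeltaSet P)"
    using closed_compactin closedin_DeltaSet[OF assms] by blast
  then show ?thesis by (rule compact_space_subtopology)
qed

lemma Hausdorff_powertop_sub: "Hausdorff_space (subtopology (powertop_real UNIV) S)"
  by (rule Hausdorff_space_subtopology) (metis Hausdorff_space_euclidean Hausdorff_space_product_topology)

context bal begin

definition Ycal where "Ycal = {p \<in> Cn. sum p V = 1 \<and> (\<exists>v\<in>V. p v = 0)}"

lemma Phi_in_Y:
  assumes g: "g \<in> DeltaSet BB" shows "Phi g \<in> Ycal"
proof -
  have c: "chainfun BB g" and s: "sum g BB = 1" using g by (auto simp: DeltaSet_def)
  have "Phi g \<in> Cn" by (rule Phi_Cn[OF chainfun_nn[OF c]])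
  moreover have "sum (Phi g) V = 1" using Phi_sum s by simp
  moreover have "\<exists>v\<in>V. Phi g v = 0"
  proof -
    have ne: "{S. g S \<noteq> 0} \<noteq> {}"
    proof
      assume "{S. g S \<noteq> 0} = {}"
      then have "sum g BB = 0" by (intro sum.neutral) auto
      then show False using s by simp
    qed
    define S where "S = \<Union>{S. g S \<noteq> 0}"
    have "g S \<noteq> 0" using chainfun_top[OF finite_BB c ne] by (simp add: S_def)
    then have "S \<in> BB" by (rule chainfun_in[OF c])
    then have "S \<subseteq> V" "S \<noteq> V" by (auto simp: balanced_poset_def)
    then obtain v where v: "v \<in> V" "v \<notin> S" by blast
    have "Phi g v = 0" using Phi_supp_eq[OF c] v(2) unfolding S_def by blast
    then show ?thesis using v(1) by blast
  qed
  ultimately show ?thesis by (simp add: Ycal_def)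
qed

lemma Y_in_image:
  assumes p: "p \<in> Ycal" shows "\<exists>g\<in>DeltaSet BB. Phi g = p"
proof -
  have pC: "p \<in> Cn" and ps: "sum p V = 1" and pz: "\<exists>v\<in>V. p v = 0" using p by (auto simp: Ycal_def)
  have "{v. p v \<noteq> 0} \<noteq> V" using pz by blast
  then obtain g where g: "chainfun BB g" "Phi g = p" using ex_decomp[OF pC] by blast
  have "sum g BB = 1" using Phi_sum[of g] g(2) ps by simp
  then show ?thesis using g by (auto simp: DeltaSet_def)
qed

lemma Phi_cont_pt: "continuous_map (subtopology (powertop_real UNIV) D) (powertop_real UNIV) Phi"
  unfolding continuous_map_componentwise_UNIV Phi_def
  by (intro allI continuous_map_sum finite_BB continuous_map_real_mult cproj_sub continuous_map_canonical_const)

lemma Phi_homeo: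
  "homeomorphic_map (subtopology (powertop_real UNIV) (DeltaSet BB)) (subtopology (powertop_real UNIV) Ycal) Phi"
proof (rule continuous_imp_homeomorphic_map)
  show "continuous_map (subtopology (powertop_real UNIV) (DeltaSet BB)) (subtopology (powertop_real UNIV) Ycal) Phi"
    unfolding continuous_map_in_subtopology using Phi_cont_pt Phi_in_Y by auto
  show "compact_space (subtopology (powertop_real UNIV) (DeltaSet BB))"
    by (rule compact_DeltaSet[OF finite_BB])
  show "Hausdorff_space (subtopology (powertop_real UNIV) Ycal)" by (rule Hausdorff_powertop_sub)
  show "Phi ` topspace (subtopology (powertop_real UNIV) (DeltaSet BB)) = topspace (subtopology (powertop_real UNIV) Ycal)"
    using Phi_in_Y Y_in_image by auto
  show "inj_on Phi (topspace (subtopology (powertop_real UNIV) (DeltaSet BB)))"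
    by (auto intro!: inj_onI uniq_decomp simp: DeltaSet_def)
qed

end



lemma cfst: "continuous_map (prod_topology (top_of_set {0..1::real}) X) euclideanreal fst"
  using continuous_map_fst[of "top_of_set {0..1::real}" X] continuous_map_in_subtopology by blast

lemma csnd_proj: "continuous_map (prod_topology (top_of_set {0..1::real}) (subtopology (powertop_real UNIV) D)) euclideanreal (\<lambda>z. snd z y)"
proof -
  have "continuous_map (prod_topology (top_of_set {0..1::real}) (subtopology (powertop_real UNIV) D)) euclideanreal ((\<lambda>g. g y) \<circ> snd)"
    by (rule continuous_map_compose[OF continuous_map_snd cproj_sub])
  then show ?thesis by (simp add: o_def)
qed

context bal begin

definition phi :: "'a set \<Rightarrow> 'a set" where
  "phi S = \<Union>{T \<in> BB. T \<subseteq> S}"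

lemma phi_sub: "phi S \<subseteq> S"
  unfolding phi_def by blast

lemma phi_mono: "S \<subseteq> S' \<Longrightarrow> phi S \<subseteq> phi S'"
  unfolding phi_def by blast

lemma phi_id: assumes "S \<in> BB" shows "phi S = S"
proof
  show "phi S \<subseteq> S" by (rule phi_sub)
  show "S \<subseteq> phi S" unfolding phi_def by (rule Union_upper) (simp add: assms)
qed

lemma phi_BB:
  assumes S: "S \<in> WB" shows "phi S \<in> BB"
proof -
  have SV: "S \<subseteq> V" "S \<noteq> V" using S by (auto simp: weakly_balanced_poset_def)
  from S[unfolded WB_iff] obtain l where l: "l \<in> Cn" "\<exists>v. l v \<noteq> 0" "{v. l v \<noteq> 0} \<subseteq> S"
    by (elim conjE bexE)
  have a1: "{v. l v \<noteq> 0} \<subseteq> V" using l(3) SV(1) by (rule order_trans)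
  have a2: "{v. l v \<noteq> 0} \<noteq> V" using l(3) SV by auto
  have a3: "{v. l v \<noteq> 0} \<noteq> {}" using l(2) by auto
  have lB: "{v. l v \<noteq> 0} \<in> BB"
    unfolding BB_iff using a1 a2 a3 l(1) by auto
  have "{v. l v \<noteq> 0} \<subseteq> phi S" unfolding phi_def by (rule Union_upper) (simp add: lB l(3))
  then have ne: "phi S \<noteq> {}" using a3 by auto
  define g where "g T = (if T \<in> BB \<and> T \<subseteq> S then 1 else 0::real)" for T
  have gnn: "\<And>T. 0 \<le> g T" by (simp add: g_def)
  have "Phi g \<in> Cn" by (rule Phi_Cn[OF gnn])
  moreover have "{v. Phi g v \<noteq> 0} = phi S"
  proof -
    have "Phi g v \<noteq> 0 \<longleftrightarrow> (\<exists>T\<in>BB. g T \<noteq> 0 \<and> v \<in> T)" for v by (rule Phi_supp[OF gnn])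
    then show ?thesis unfolding phi_def g_def by auto
  qed
  moreover have "phi S \<subseteq> V" "phi S \<noteq> V" using phi_sub[of S] SV by auto
  ultimately show ?thesis unfolding BB_iff using ne by auto
qed

lemma WB_sub_V: "S \<in> WB \<Longrightarrow> S \<subseteq> V"
  by (simp add: weakly_balanced_poset_def)

definition push :: "('a set \<Rightarrow> real) \<Rightarrow> 'a set \<Rightarrow> real" where
  "push g = (\<lambda>y. \<Sum>x\<in>WB. if phi x = y then g x else 0)"

definition alpha :: "real \<Rightarrow> 'a set \<Rightarrow> real" where
  "alpha t x = max 0 (min 1 (t * (real (card V) + 1) - real (card (x \<inter> V))))"

definition H :: "real \<times> ('a set \<Rightarrow> real) \<Rightarrow> 'a set \<Rightarrow> real" where
  "H z = (\<lambda>y. snd z y * (1 - alpha (fst z) y) + (\<Sum>x\<in>WB. if phi x = y then snd z x * alpha (fst z) x else 0))"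

lemma alpha_01: "0 \<le> alpha t x" "alpha t x \<le> 1"
  by (auto simp: alpha_def)

lemma alpha_0: "alpha 0 x = 0"
  by (simp add: alpha_def)

lemma alpha_1: "alpha 1 x = 1"
proof -
  have "card (x \<inter> V) \<le> card V" by (rule card_mono[OF finV]) blast
  then show ?thesis by (simp add: alpha_def)
qed

lemma H_0: "H (0, g) = g"
  by (simp add: H_def alpha_0 cong: if_cong)

lemma H_1: "H (1, g) = push g"
  by (simp add: H_def alpha_1 push_def cong: if_cong)

lemma sum_phi_swap:
  "(\<Sum>y\<in>WB. \<Sum>x\<in>WB. if phi x = y then f x else 0) = (\<Sum>x\<in>WB. f x)"
proof -
  have "(\<Sum>y\<in>WB. \<Sum>x\<in>WB. if phi x = y then f x else 0) = (\<Sum>x\<in>WB. \<Sum>y\<in>WB. if phi x = y then f x else 0)"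
    by (rule sum.swap)
  also have "\<dots> = (\<Sum>x\<in>WB. f x)"
  proof (rule sum.cong[OF refl])
    fix x assume "x \<in> WB"
    then have "phi x \<in> WB" using phi_BB BB_sub_WB by blast
    then show "(\<Sum>y\<in>WB. if phi x = y then f x else 0) = f x" using finite_WB by simp
  qed
  finally show ?thesis .
qed

lemma sum_phi_swap_BB:
  "(\<Sum>y\<in>BB. \<Sum>x\<in>WB. if phi x = y then f x else 0) = (\<Sum>x\<in>WB. f x)"
proof -
  have "(\<Sum>y\<in>BB. \<Sum>x\<in>WB. if phi x = y then f x else 0) = (\<Sum>x\<in>WB. \<Sum>y\<in>BB. if phi x = y then f x else 0)"
    by (rule sum.swap)
  also have "\<dots> = (\<Sum>x\<in>WB. f x)"
  proof (rule sum.cong[OF refl])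
    fix x assume "x \<in> WB"
    then have "phi x \<in> BB" using phi_BB by blast
    then show "(\<Sum>y\<in>BB. if phi x = y then f x else 0) = f x" using finite_BB by simp
  qed
  finally show ?thesis .
qed

lemma push_in:
  assumes g: "g \<in> DeltaSet WB" shows "push g \<in> DeltaSet BB"
proof -
  have c: "chainfun WB g" and s: "sum g WB = 1" using g by (auto simp: DeltaSet_def)
  have nn: "0 \<le> push g y" for y
    unfolding push_def using chainfun_nn[OF c] by (intro sum_nonneg) auto
  have z: "push g y = 0" if "y \<notin> BB" for y
    unfolding push_def
  proof (rule sum.neutral, rule ballI)
    fix x assume "x \<in> WB"
    then have "phi x \<in> BB" by (rule phi_BB)
    then have "phi x \<noteq> y" using that by auto
    then show "(if phi x = y then g x else 0) = 0" by simp
  qed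
  have supp: "push g y \<noteq> 0 \<Longrightarrow> \<exists>x. g x \<noteq> 0 \<and> phi x = y" for y
  proof -
    assume "push g y \<noteq> 0"
    have "\<exists>x\<in>WB. (if phi x = y then g x else 0) \<noteq> 0"
    proof (rule ccontr)
      assume "\<not> (\<exists>x\<in>WB. (if phi x = y then g x else 0) \<noteq> 0)"
      then have "push g y = 0" unfolding push_def by (intro sum.neutral) simp
      with \<open>push g y \<noteq> 0\<close> show False by simp
    qed
    then obtain x where "x \<in> WB" "(if phi x = y then g x else 0) \<noteq> 0" by (elim bexE)
    then show ?thesis by (auto split: if_splits)
  qed
  have cmp: "x \<subseteq> y \<or> y \<subseteq> x" if px: "push g x \<noteq> 0" and py: "push g y \<noteq> 0" for x y
  proof -
    obtain x1 where x1: "g x1 \<noteq> 0" "phi x1 = x" using supp[OF px] by blast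
    obtain y1 where y1: "g y1 \<noteq> 0" "phi y1 = y" using supp[OF py] by blast
    have "x1 \<subseteq> y1 \<or> y1 \<subseteq> x1" by (rule chainfun_cmp[OF c x1(1) y1(1)])
    then show ?thesis using phi_mono x1(2) y1(2) by blast
  qed
  have "sum (push g) BB = sum g WB"
    unfolding push_def by (rule sum_phi_swap_BB)
  then show ?thesis unfolding DeltaSet_def chainfun_def using nn z cmp s by auto
qed

lemma H_eq: "H (t, g) y = g y * (1 - alpha t y) + (\<Sum>x\<in>WB. if phi x = y then g x * alpha t x else 0)"
  by (simp add: H_def cong: if_cong)

lemma H_in:
  assumes t: "t \<in> {0..1}" and g: "g \<in> DeltaSet WB" shows "H (t, g) \<in> DeltaSet WB"
proof -
  have c: "chainfun WB g" and s: "sum g WB = 1" using g by (auto simp: DeltaSet_def)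
  have gz: "y \<notin> WB \<Longrightarrow> g y = 0" for y using c unfolding chainfun_def by simp
  let ?h = "H (t, g)"
  have nn: "0 \<le> ?h y" for y
    unfolding H_eq using chainfun_nn[OF c] alpha_01
    by (intro add_nonneg_nonneg sum_nonneg mult_nonneg_nonneg) auto
  have z: "?h y = 0" if "y \<notin> WB" for y
  proof -
    have "(\<Sum>x\<in>WB. if phi x = y then g x * alpha t x else 0) = 0"
    proof (rule sum.neutral, rule ballI)
      fix x assume "x \<in> WB"
      then have "phi x \<noteq> y" using phi_BB BB_sub_WB that by blast
      then show "(if phi x = y then g x * alpha t x else 0) = 0" by simp
    qed
    then show ?thesis unfolding H_eq using gz[OF that] by simp
  qed
  have supp: "(g y \<noteq> 0 \<and> alpha t y \<noteq> 1) \<or> (\<exists>x. g x \<noteq> 0 \<and> alpha t x \<noteq> 0 \<and> phi x = y)" if "?h y \<noteq> 0" for y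
  proof (rule ccontr)
    assume a: "\<not> ?thesis"
    then have 1: "g y * (1 - alpha t y) = 0" by auto
    have "(\<Sum>x\<in>WB. if phi x = y then g x * alpha t x else 0) = 0"
      using a by (intro sum.neutral) auto
    then show False using that 1 by (simp add: H_eq)
  qed
  have card_lt: "card x < card y" if "x \<subset> y" "y \<in> WB" for x y
    using that WB_sub_V finV by (meson finite_subset psubset_card_mono)
  have key: "False" if "g y \<noteq> 0" "alpha t y \<noteq> 1" "g x \<noteq> 0" "alpha t x \<noteq> 0" "y \<subset> x" for x y
  proof -
    have xW: "x \<in> WB" "y \<in> WB" using chainfun_in[OF c] that by auto
    have "card y < card x" by (rule card_lt[OF that(5) xW(1)])
    moreover have "x \<inter> V = x" "y \<inter> V = y" using WB_sub_V xW by auto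
    ultimately have cc: "real (card (y \<inter> V)) + 1 \<le> real (card (x \<inter> V))" by simp
    have "t * (real (card V) + 1) - real (card (x \<inter> V)) > 0"
      using that(4) unfolding alpha_def by (auto simp: max_def min_def split: if_splits)
    then have "t * (real (card V) + 1) - real (card (y \<inter> V)) \<ge> 1" using cc by linarith
    then have "alpha t y = 1" unfolding alpha_def by simp
    then show False using that(2) by simp
  qed
  have cmp: "x \<subseteq> y \<or> y \<subseteq> x" if "?h x \<noteq> 0" "?h y \<noteq> 0" for x y
  proof -
    have mixed: "a \<subseteq> phi b \<or> phi b \<subseteq> a" if "g a \<noteq> 0" "alpha t a \<noteq> 1" "g b \<noteq> 0" "alpha t b \<noteq> 0" for a b
    proof -
      have "a \<subseteq> b \<or> b \<subseteq> a" by (rule chainfun_cmp[OF c that(1) that(3)])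
      moreover have "\<not> a \<subset> b" using key[OF that(1,2,3,4)] by blast
      ultimately have "b \<subseteq> a" by blast
      then show ?thesis using phi_sub[of b] by blast
    qed
    show ?thesis
      using supp[OF that(1)] supp[OF that(2)]
    proof (elim disjE exE conjE)
      assume "g x \<noteq> 0" "g y \<noteq> 0"
      then show ?thesis by (rule chainfun_cmp[OF c])
    next
      fix b assume "g x \<noteq> 0" "alpha t x \<noteq> 1" "g b \<noteq> 0" "alpha t b \<noteq> 0" "phi b = y"
      then show ?thesis using mixed by blast
    next
      fix a assume "g y \<noteq> 0" "alpha t y \<noteq> 1" "g a \<noteq> 0" "alpha t a \<noteq> 0" "phi a = x"
      then show ?thesis using mixed by blast
    next
      fix a b assume "g a \<noteq> 0" "phi a = x" "g b \<noteq> 0" "phi b = y"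
      have "a \<subseteq> b \<or> b \<subseteq> a" by (rule chainfun_cmp[OF c \<open>g a \<noteq> 0\<close> \<open>g b \<noteq> 0\<close>])
      then show ?thesis using phi_mono \<open>phi a = x\<close> \<open>phi b = y\<close> by blast
    qed
  qed
  have "sum ?h WB = (\<Sum>y\<in>WB. g y * (1 - alpha t y)) + (\<Sum>y\<in>WB. \<Sum>x\<in>WB. if phi x = y then g x * alpha t x else 0)"
    unfolding H_eq by (simp add: sum.distrib)
  also have "\<dots> = (\<Sum>y\<in>WB. g y * (1 - alpha t y)) + (\<Sum>x\<in>WB. g x * alpha t x)"
    by (simp only: sum_phi_swap)
  also have "\<dots> = sum g WB"
    by (simp add: sum.distrib[symmetric] algebra_simps)
  finally have "sum ?h WB = 1" using s by simp
  then show ?thesis unfolding DeltaSet_def chainfun_def using nn z cmp by blast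
qed


lemma calpha: "continuous_map (prod_topology (top_of_set {0..1::real}) X) euclideanreal (\<lambda>z. alpha (fst z) x)"
  unfolding alpha_def
  by (intro continuous_map_real_max continuous_map_real_min continuous_map_diff continuous_map_real_mult
      cfst continuous_map_canonical_const)

lemma H_cont_pt:
  "continuous_map (prod_topology (top_of_set {0..1::real}) (subtopology (powertop_real UNIV) D)) (powertop_real UNIV) H"
  unfolding continuous_map_componentwise_UNIV
proof
  fix y
  let ?Z = "prod_topology (top_of_set {0..1::real}) (subtopology (powertop_real UNIV) D)"
  have c1: "continuous_map ?Z euclideanreal (\<lambda>z. if phi x = y then snd z x * alpha (fst z) x else 0)" for x
    by (cases "phi x = y") (simp_all add: continuous_map_real_mult csnd_proj calpha)
  have "continuous_map ?Z euclideanreal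
     (\<lambda>z. snd z y * (1 - alpha (fst z) y) + (\<Sum>x\<in>WB. if phi x = y then snd z x * alpha (fst z) x else 0))"
    by (intro continuous_map_add continuous_map_real_mult continuous_map_diff csnd_proj calpha
        continuous_map_canonical_const continuous_map_sum finite_WB c1)
  then show "continuous_map ?Z euclideanreal (\<lambda>z. H z y)"
    by (simp add: H_def)
qed

lemma push_cont_pt: "continuous_map (subtopology (powertop_real UNIV) D) (powertop_real UNIV) push"
  unfolding continuous_map_componentwise_UNIV
proof
  fix y
  have c1: "continuous_map (subtopology (powertop_real UNIV) D) euclideanreal (\<lambda>g. if phi x = y then g x else 0)" for x
    by (cases "phi x = y") (simp_all add: cproj_sub)
  show "continuous_map (subtopology (powertop_real UNIV) D) euclideanreal (\<lambda>g. push g y)"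
    unfolding push_def by (intro continuous_map_sum finite_WB c1)
qed

lemma Delta_BB_WB: "DeltaSet BB \<subseteq> DeltaSet WB"
proof
  fix g assume g: "g \<in> DeltaSet BB"
  have c: "chainfun BB g" and s: "sum g BB = 1" using g by (auto simp: DeltaSet_def)
  have "chainfun WB g" unfolding chainfun_def
  proof (intro conjI allI impI)
    fix x show "0 \<le> g x" by (rule chainfun_nn[OF c])
  next
    fix x assume "x \<notin> WB"
    then have "x \<notin> BB" using BB_sub_WB by blast
    then show "g x = 0" using chainfun_in[OF c, of x] by auto
  next
    fix x y assume "g x \<noteq> 0 \<and> g y \<noteq> 0"
    then show "x \<subseteq> y \<or> y \<subseteq> x" using chainfun_cmp[OF c, of x y] by auto
  qed
  moreover have "sum g WB = sum g BB"
  proof (rule sum.mono_neutral_right[OF finite_WB BB_sub_WB], rule ballI)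
    fix x assume "x \<in> WB - BB"
    then show "g x = 0" using c unfolding chainfun_def by simp
  qed
  ultimately show "g \<in> DeltaSet WB" using s by (simp add: DeltaSet_def)
qed

lemma push_id: assumes g: "g \<in> DeltaSet BB" shows "push g = g"
proof
  fix y
  have c: "chainfun BB g" using g by (simp add: DeltaSet_def)
  have "(if phi x = y then g x else 0) = (if x = y then g x else 0)" if "x \<in> WB" for x
  proof (cases "g x = 0")
    case False
    then have "x \<in> BB" by (rule chainfun_in[OF c])
    then show ?thesis using phi_id by simp
  qed auto
  then have "push g y = (\<Sum>x\<in>WB. if x = y then g x else 0)" unfolding push_def by (rule sum.cong[OF refl])
  also have "\<dots> = g y"
  proof (cases "y \<in> WB")
    case True then show ?thesis using finite_WB by simp
  next
    case False
    then have "y \<notin> BB" using BB_sub_WB by blast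
    then have "g y = 0" using c unfolding chainfun_def by simp
    then show ?thesis using finite_WB False by simp
  qed
  finally show "push g y = g y" .
qed

theorem WB_equiv_BB:
  "order_complex_realization WB homotopy_equivalent_space order_complex_realization BB"
proof -
  let ?XW = "subtopology (powertop_real UNIV) (DeltaSet WB)"
  let ?XB = "subtopology (powertop_real UNIV) (DeltaSet BB)"
  have f: "continuous_map ?XW ?XB push"
    unfolding continuous_map_in_subtopology using push_cont_pt push_in by auto
  have g: "continuous_map ?XB ?XW id"
    unfolding continuous_map_in_subtopology
    using continuous_map_from_subtopology[OF continuous_map_id] Delta_BB_WB by auto
  have h1: "homotopic_with (\<lambda>x. True) ?XW ?XW id (id \<circ> push)"
    unfolding homotopic_with_def
  proof (intro exI conjI allI ballI)
    show "continuous_map (prod_topology (top_of_set {0..1}) ?XW) ?XW H"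
      unfolding continuous_map_in_subtopology using H_cont_pt H_in by auto
    fix x show "H (0, x) = id x" by (simp add: H_0)
  next
    fix x show "H (1, x) = (id \<circ> push) x" by (simp add: H_1)
  qed auto
  have h2: "homotopic_with (\<lambda>x. True) ?XB ?XB (push \<circ> id) id"
    by (rule homotopic_with_equal) (use continuous_map_compose[OF g f] push_id in auto)
  show ?thesis
    unfolding ocr_eq homotopy_equivalent_space_def
    using f g h1 h2 homotopic_with_sym by blast
qed

end


lemma continuous_map_Max:
  assumes "finite I" "I \<noteq> {}" "\<And>i. i \<in> I \<Longrightarrow> continuous_map X euclideanreal (f i)"
  shows "continuous_map X euclideanreal (\<lambda>x. Max ((\<lambda>i. f i x) ` I))"
  using assms
proof (induction I rule: finite_ne_induct)
  case (singleton i)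
  then show ?case by simp
next
  case (insert i I)
  have "continuous_map X euclideanreal (\<lambda>x. max (f i x) (Max ((\<lambda>i. f i x) ` I)))"
    using insert by (intro continuous_map_real_max) auto
  moreover have "Max ((\<lambda>j. f j x) ` insert i I) = max (f i x) (Max ((\<lambda>i. f i x) ` I))" for x
    using insert by simp
  ultimately show ?case by simp
qed

locale bal2 = bal +
  assumes rint: "r \<in> rel_interior (convex hull V)"
begin

definition L0 where
  "L0 = {u. (\<forall>v. v \<notin> V \<longrightarrow> u v = 0) \<and> sum u V = 0 \<and> (\<Sum>v\<in>V. u v *\<^sub>R v) = 0}"

lemma L0_diff: "u \<in> L0 \<Longrightarrow> w \<in> L0 \<Longrightarrow> (\<lambda>v. u v - w v) \<in> L0"
  unfolding L0_def by (auto simp: sum_subtractf scaleR_diff_left)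

lemma L0_lincomb:
  assumes "finite I" "\<And>i. i \<in> I \<Longrightarrow> x i \<in> L0"
  shows "(\<lambda>v. \<Sum>i\<in>I. a i * x i v) \<in> L0"
proof -
  have z: "(\<Sum>i\<in>I. a i * x i v) = 0" if "v \<notin> V" for v
    using assms(2) that unfolding L0_def by (intro sum.neutral) auto
  have s: "(\<Sum>v\<in>V. \<Sum>i\<in>I. a i * x i v) = 0"
    by (subst sum.swap) (use assms(2) in \<open>auto simp: L0_def sum_distrib_left[symmetric] intro!: sum.neutral\<close>)
  have w: "(\<Sum>v\<in>V. (\<Sum>i\<in>I. a i * x i v) *\<^sub>R v) = 0"
  proof -
    have "(\<Sum>v\<in>V. (\<Sum>i\<in>I. a i * x i v) *\<^sub>R v) = (\<Sum>i\<in>I. a i *\<^sub>R (\<Sum>v\<in>V. x i v *\<^sub>R v))"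
      by (simp add: scaleR_sum_left scaleR_sum_right sum.swap[of _ V])
    also have "\<dots> = 0" using assms(2) by (intro sum.neutral) (auto simp: L0_def)
    finally show ?thesis .
  qed
  show ?thesis unfolding L0_def using z s w by auto
qed

lemma c_ex: "\<exists>c. c \<in> Cn \<and> (\<forall>v\<in>V. c v > 0) \<and> sum c V = 1"
proof -
  obtain u where u: "\<forall>x\<in>V. 0 < u x" "sum u V = 1" "(\<Sum>x\<in>V. u x *\<^sub>R x) = r"
    using relint_hull_iff[OF finV] rint by blast
  define c where "c v = (if v \<in> V then u v else 0)" for v
  have "(\<Sum>v\<in>V. c v *\<^sub>R (v - r)) = (\<Sum>v\<in>V. u v *\<^sub>R (v - r))" by (intro sum.cong) (auto simp: c_def)
  also have "\<dots> = 0" using u by (simp add: scaleR_diff_right sum_subtractf scaleR_sum_left[symmetric])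
  finally have "c \<in> Cn" unfolding Cn_def using u by (auto simp: c_def less_imp_le)
  moreover have "sum c V = 1" using u by (simp add: c_def)
  ultimately show ?thesis using u by (auto simp: c_def)
qed

definition c where "c = (SOME c. c \<in> Cn \<and> (\<forall>v\<in>V. c v > 0) \<and> sum c V = 1)"

lemma c_props: "c \<in> Cn" "\<And>v. v \<in> V \<Longrightarrow> c v > 0" "sum c V = 1"
  using someI_ex[OF c_ex] unfolding c_def[symmetric] by auto

lemma Cn_diff_L0:
  assumes "p \<in> Cn" "sum p V = 1" shows "(\<lambda>v. p v - c v) \<in> L0"
proof -
  have "(\<Sum>v\<in>V. (p v - c v) *\<^sub>R v) = (\<Sum>v\<in>V. p v *\<^sub>R v) - (\<Sum>v\<in>V. c v *\<^sub>R v)"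
    by (simp add: scaleR_diff_left sum_subtractf)
  also have "\<dots> = 0" using Cn_sum_eq[OF assms(1)] Cn_sum_eq[OF c_props(1)] assms(2) c_props(3) by simp
  moreover have "p v - c v = 0" if "v \<notin> V" for v
    using Cn_zero[OF assms(1) that] Cn_zero[OF c_props(1) that] by simp
  ultimately show ?thesis unfolding L0_def using assms c_props by (auto simp: sum_subtractf)
qed

definition A where "A = (SOME B. B \<subseteq> V \<and> \<not> affine_dependent B \<and> affine hull V = affine hull B)"

lemma A_props: "A \<subseteq> V" "\<not> affine_dependent A" "affine hull V = affine hull A"
  using someI_ex[OF affine_basis_exists[of V]] unfolding A_def[symmetric] by auto

lemma finA: "finite A" using A_props(1) finV finite_subset by blast

definition F where "F = V - A"

lemma finF: "finite F" using finV by (simp add: F_def)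

definition co :: "'a \<Rightarrow> 'a \<Rightarrow> real" where
  "co f = (SOME u. sum u A = 1 \<and> (\<Sum>a\<in>A. u a *\<^sub>R a) = f)"

lemma co_props:
  assumes "f \<in> V" shows "sum (co f) A = 1" "(\<Sum>a\<in>A. co f a *\<^sub>R a) = f"
proof -
  have "f \<in> affine hull V" by (rule hull_inc[OF assms])
  then have "f \<in> affine hull A" by (simp only: A_props(3))
  then have "\<exists>u. sum u A = 1 \<and> (\<Sum>a\<in>A. u a *\<^sub>R a) = f"
    unfolding affine_hull_finite[OF finA] by simp
  from someI_ex[OF this] show "sum (co f) A = 1" "(\<Sum>a\<in>A. co f a *\<^sub>R a) = f"
    unfolding co_def[symmetric] by auto
qed

definition e :: "'a \<Rightarrow> 'a \<Rightarrow> real" where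
  "e f = (\<lambda>v. (if v = f then 1 else 0) - (if v \<in> A then co f v else 0))"

lemma e_L0: assumes f: "f \<in> F" shows "e f \<in> L0"
proof -
  have fV: "f \<in> V" "f \<notin> A" using f by (auto simp: F_def)
  have z: "e f v = 0" if "v \<notin> V" for v using that fV A_props(1) by (auto simp: e_def)
  have s1: "(\<Sum>v\<in>V. (if v \<in> A then co f v else 0)) = sum (co f) A"
    using sum.inter_restrict[OF finV, of "co f" A] A_props(1) by (simp add: Int_absorb1)
  have s2: "(\<Sum>v\<in>V. (if v \<in> A then co f v else 0) *\<^sub>R v) = (\<Sum>a\<in>A. co f a *\<^sub>R a)"
  proof -
    have "(\<Sum>v\<in>V. (if v \<in> A then co f v else 0) *\<^sub>R v) = (\<Sum>v\<in>V. if v \<in> A then co f v *\<^sub>R v else 0)"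
      by (intro sum.cong) auto
    also have "\<dots> = (\<Sum>a\<in>V \<inter> A. co f a *\<^sub>R a)" by (rule sum.inter_restrict[OF finV, symmetric])
    finally show ?thesis using A_props(1) by (simp add: Int_absorb1)
  qed
  have "sum (e f) V = 0"
    unfolding e_def using fV finV s1 co_props(1)[OF fV(1)] by (simp add: sum_subtractf)
  moreover have "(\<Sum>v\<in>V. e f v *\<^sub>R v) = 0"
  proof -
    have "(\<Sum>v\<in>V. e f v *\<^sub>R v) = (\<Sum>v\<in>V. (if v = f then 1 else 0) *\<^sub>R v) - (\<Sum>v\<in>V. (if v \<in> A then co f v else 0) *\<^sub>R v)"
      unfolding e_def by (simp add: scaleR_diff_left sum_subtractf)
    also have "\<dots> = f - f" using s2 co_props(2)[OF fV(1)] fV(1) finV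
      by (simp add: if_distrib[of "\<lambda>x. x *\<^sub>R _"] cong: if_cong)
    finally show ?thesis by simp
  qed
  ultimately show ?thesis unfolding L0_def using z by auto
qed

lemma e_F: "f \<in> F \<Longrightarrow> f' \<in> F \<Longrightarrow> e f f' = (if f' = f then 1 else 0)"
  by (auto simp: e_def F_def)

lemma L0_zero:
  assumes u: "u \<in> L0" and zF: "\<And>f. f \<in> F \<Longrightarrow> u f = 0"
  shows "u v = 0"
proof -
  have zA: "u v = 0" if "v \<notin> A" for v
  proof (cases "v \<in> V")
    case True then show ?thesis using zF that by (auto simp: F_def)
  next
    case False then show ?thesis using u by (auto simp: L0_def)
  qed
  have "sum u A = 0"
    using sum_restrict0(2)[of A u, OF A_props(1) zA] u by (simp add: L0_def)
  moreover have "(\<Sum>a\<in>A. u a *\<^sub>R a) = 0"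
    using sum_restrict0(1)[of A u "\<lambda>x. x", OF A_props(1) zA] u by (simp add: L0_def)
  ultimately have "\<forall>a\<in>A. u a = 0"
    using A_props(2) affine_dependent_explicit_finite[OF finA] by blast
  then show ?thesis using zA by (cases "v \<in> A") auto
qed

lemma L0_decomp:
  assumes u: "u \<in> L0" shows "u v = (\<Sum>f\<in>F. u f * e f v)"
proof -
  define w where "w v = u v - (\<Sum>f\<in>F. u f * e f v)" for v
  have "(\<lambda>v. \<Sum>f\<in>F. u f * e f v) \<in> L0" by (rule L0_lincomb[OF finF e_L0])
  then have wL: "w \<in> L0" unfolding w_def using L0_diff[OF u] by blast
  have "w f' = 0" if "f' \<in> F" for f'
  proof -
    have "(\<Sum>f\<in>F. u f * e f f') = (\<Sum>f\<in>F. if f' = f then u f else 0)"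
      by (intro sum.cong) (use that e_F in auto)
    also have "\<dots> = u f'" using that finF by simp
    finally show ?thesis by (simp add: w_def)
  qed
  then have "w v = 0" using L0_zero[OF wL] by blast
  then show ?thesis by (simp add: w_def)
qed


lemma V_ne: "V \<noteq> {}" using c_props(3) by auto

lemma Cn_normalize:
  assumes "l \<in> Cn" "l v0 \<noteq> 0"
  shows "sum l V > 0" "(\<lambda>v. l v / sum l V) \<in> Cn" "sum (\<lambda>v. l v / sum l V) V = 1"
proof -
  have "v0 \<in> V" using assms Cn_zero by blast
  moreover have "l v0 > 0" using assms Cn_nonneg[OF assms(1), of v0] by simp
  ultimately show s: "sum l V > 0"
    using finV Cn_nonneg[OF assms(1)] by (metis sum_pos2)
  show "(\<lambda>v. l v / sum l V) \<in> Cn" using assms(1) s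
    by (auto simp: Cn_def scaleR_sum_right[symmetric] divide_inverse mult.commute[of _ "inverse _"]
        simp flip: scaleR_scaleR)
  show "sum (\<lambda>v. l v / sum l V) V = 1" using s by (simp add: sum_divide_distrib[symmetric])
qed

lemma F_ne: assumes "WB \<noteq> {}" shows "F \<noteq> {}"
proof
  assume F0: "F = {}"
  obtain S where S: "S \<in> WB" using assms by blast
  have SV: "S \<subseteq> V" "S \<noteq> V" using S by (auto simp: weakly_balanced_poset_def)
  from S[unfolded WB_iff] obtain l where l: "l \<in> Cn" "\<exists>v. l v \<noteq> 0" "{v. l v \<noteq> 0} \<subseteq> S"
    by (elim conjE bexE)
  obtain v0 where v0: "l v0 \<noteq> 0" using l(2) by blast
  define l' where "l' v = l v / sum l V" for v
  have l': "l' \<in> Cn" "sum l' V = 1" using Cn_normalize[OF l(1) v0] by (simp_all add: l'_def[abs_def])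
  have uL: "(\<lambda>v. l' v - c v) \<in> L0" by (rule Cn_diff_L0[OF l'])
  obtain w where w: "w \<in> V" "w \<notin> S" using SV by blast
  have "l' w - c w = 0" using L0_zero[OF uL] F0 by simp
  moreover have "l' w = 0" using w l(3) by (auto simp: l'_def)
  ultimately show False using c_props(2)[OF w(1)] by simp
qed

definition nF where "nF = card F - 1"

definition idx :: "nat \<Rightarrow> 'a" where
  "idx = (SOME h. bij_betw h {0..<card F} F)"

lemma idx_bij: assumes "F \<noteq> {}" shows "bij_betw idx {..nF} F"
proof -
  have "bij_betw idx {0..<card F} F"
    using someI_ex[OF ex_bij_betw_nat_finite[OF finF]] unfolding idx_def[symmetric] .
  moreover have "card F > 0" using assms finF card_gt_0_iff by blast
  then have "{0..<card F} = {..nF}" by (auto simp: nF_def)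
  ultimately show ?thesis by simp
qed

definition E :: "(nat \<Rightarrow> real) \<Rightarrow> 'a \<Rightarrow> real" where
  "E z = (\<lambda>v. \<Sum>i\<le>nF. z i * e (idx i) v)"

definition Mx :: "('a \<Rightarrow> real) \<Rightarrow> real" where
  "Mx w = Max ((\<lambda>v. - w v / c v) ` V)"

definition toY :: "(nat \<Rightarrow> real) \<Rightarrow> 'a \<Rightarrow> real" where
  "toY z = (\<lambda>v. c v + E z v / Mx (E z))"

definition Pp :: "('a \<Rightarrow> real) \<Rightarrow> nat \<Rightarrow> real" where
  "Pp p = (\<lambda>i. if i \<le> nF then p (idx i) - c (idx i) else 0)"

definition nrm :: "(nat \<Rightarrow> real) \<Rightarrow> real" where
  "nrm x = sqrt (\<Sum>i\<le>nF. (x i)^2)"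

definition fromY :: "('a \<Rightarrow> real) \<Rightarrow> nat \<Rightarrow> real" where
  "fromY p = (\<lambda>i. Pp p i / nrm (Pp p))"

definition Sph where "Sph = {x::nat\<Rightarrow>real. (\<Sum>i\<le>nF. (x i)^2) = 1 \<and> (\<forall>i>nF. x i = 0)}"

lemma topspace_nsphere_Sph: "topspace (nsphere nF) = Sph"
  by (simp add: nsphere Sph_def)

context
  assumes Fne: "F \<noteq> {}"
begin

lemma idx_F: "i \<le> nF \<Longrightarrow> idx i \<in> F"
  using idx_bij[OF Fne] by (auto simp: bij_betw_def)

lemma idx_inj: "i \<le> nF \<Longrightarrow> j \<le> nF \<Longrightarrow> idx i = idx j \<longleftrightarrow> i = j"
  using idx_bij[OF Fne] by (auto simp: bij_betw_def inj_on_def)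

lemma idx_surj: assumes "f \<in> F" shows "\<exists>i\<le>nF. idx i = f"
proof -
  have "f \<in> idx ` {..nF}" using idx_bij[OF Fne] assms by (simp add: bij_betw_def)
  then show ?thesis by auto
qed

lemma E_L0: "E z \<in> L0"
  unfolding E_def by (rule L0_lincomb) (auto intro: e_L0 idx_F)

lemma E_idx: assumes "j \<le> nF" shows "E z (idx j) = z j"
proof -
  have "E z (idx j) = (\<Sum>i\<le>nF. if i = j then z i else 0)"
    unfolding E_def
  proof (rule sum.cong[OF refl])
    fix i assume "i \<in> {..nF}"
    then show "z i * e (idx i) (idx j) = (if i = j then z i else 0)"
      using e_F[OF idx_F idx_F] idx_inj assms by auto
  qed
  also have "\<dots> = z j" using assms by simp
  finally show ?thesis .
qed

lemma E_of: assumes u: "u \<in> L0" shows "E (\<lambda>i. u (idx i)) = u"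
proof
  fix v
  have "E (\<lambda>i. u (idx i)) v = (\<Sum>f\<in>F. u f * e f v)"
    unfolding E_def using sum.reindex_bij_betw[OF idx_bij[OF Fne], of "\<lambda>f. u f * e f v"] by simp
  also have "\<dots> = u v" by (rule L0_decomp[OF u, symmetric])
  finally show "E (\<lambda>i. u (idx i)) v = u v" .
qed

lemma finite_img: "finite ((\<lambda>v. - w v / c v) ` V)" "(\<lambda>v. - w v / c v) ` V \<noteq> {}"
  using finV V_ne by auto

lemma Mx_ge: "v \<in> V \<Longrightarrow> - w v / c v \<le> Mx w"
  unfolding Mx_def by (rule Max_ge[OF finite_img(1)]) simp

lemma Mx_in: "\<exists>v\<in>V. Mx w = - w v / c v"
  unfolding Mx_def using Max_in[OF finite_img] by auto

lemma Mx_pos: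
  assumes w: "w \<in> L0" and nz: "w v1 \<noteq> 0" shows "Mx w > 0"
proof -
  have "\<exists>v\<in>V. w v < 0"
  proof (rule ccontr)
    assume "\<not> (\<exists>v\<in>V. w v < 0)"
    then have nn: "\<And>v. v \<in> V \<Longrightarrow> 0 \<le> w v" by force
    have "sum w V = 0" using w by (simp add: L0_def)
    then have "\<forall>v\<in>V. w v = 0" using sum_nonneg_eq_0_iff[OF finV nn] by simp
    moreover have "v1 \<in> V" using w nz by (auto simp: L0_def)
    ultimately show False using nz by simp
  qed
  then obtain v where v: "v \<in> V" "w v < 0" by blast
  have "0 < - w v / c v" using v c_props(2)[OF v(1)] by (simp add: divide_neg_pos)
  also have "\<dots> \<le> Mx w" by (rule Mx_ge[OF v(1)])
  finally show ?thesis .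
qed

lemma Mx_scale:
  assumes "s > 0" shows "Mx (\<lambda>v. w v / s) = Mx w / s"
proof -
  have m: "mono (\<lambda>x::real. x / s)" using assms by (intro monoI) (simp add: divide_right_mono)
  have "Mx w / s = Max ((\<lambda>x. x / s) ` (\<lambda>v. - w v / c v) ` V)"
    unfolding Mx_def by (rule mono_Max_commute[OF m finite_img])
  also have "(\<lambda>x. x / s) ` (\<lambda>v. - w v / c v) ` V = (\<lambda>v. - (w v / s) / c v) ` V"
    by (simp add: image_image mult.commute)
  finally show ?thesis by (simp add: Mx_def)
qed

lemma toY_in: assumes z: "z \<in> Sph" shows "toY z \<in> Ycal"
proof -
  define w where "w = E z"
  have wL: "w \<in> L0" unfolding w_def by (rule E_L0)
  have "\<exists>j\<le>nF. z j \<noteq> 0"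
  proof (rule ccontr)
    assume "\<not> (\<exists>j\<le>nF. z j \<noteq> 0)"
    then have "(\<Sum>i\<le>nF. (z i)^2) = 0" by simp
    then show False using z by (simp add: Sph_def)
  qed
  then obtain j where j: "j \<le> nF" "z j \<noteq> 0" by blast
  have "w (idx j) \<noteq> 0" using E_idx[OF j(1)] j(2) by (simp add: w_def)
  then have M: "Mx w > 0" by (rule Mx_pos[OF wL])
  define p where "p = toY z"
  have p: "p v = c v + w v / Mx w" for v by (simp add: p_def toY_def w_def)
  have nn: "0 \<le> p v" for v
  proof (cases "v \<in> V")
    case True
    have "- w v / c v \<le> Mx w" by (rule Mx_ge[OF True])
    then have "- w v \<le> Mx w * c v" by (subst (asm) pos_divide_le_eq[OF c_props(2)[OF True]])
    then have "0 \<le> c v * Mx w + w v" by (simp add: algebra_simps)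
    then have "0 \<le> (c v * Mx w + w v) / Mx w" using M by simp
    also have "\<dots> = p v" using M by (simp add: p add_divide_distrib)
    finally show ?thesis .
  next
    case False
    then show ?thesis using Cn_zero[OF c_props(1) False] wL by (simp add: p L0_def)
  qed
  have zo: "p v = 0" if "v \<notin> V" for v
    using Cn_zero[OF c_props(1) that] wL that by (simp add: p L0_def)
  have wsum: "sum w V = 0" "(\<Sum>v\<in>V. w v *\<^sub>R v) = 0" using wL by (auto simp: L0_def)
  have "(\<Sum>v\<in>V. p v *\<^sub>R (v - r)) = (\<Sum>v\<in>V. c v *\<^sub>R (v - r)) + (1 / Mx w) *\<^sub>R (\<Sum>v\<in>V. w v *\<^sub>R (v - r))"
    by (simp add: p scaleR_add_left sum.distrib scaleR_sum_right divide_inverse mult.commute)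
  also have "\<dots> = 0" using Cn_eq[OF c_props(1)] sum_Vr[of w] wsum by simp
  finally have "p \<in> Cn" unfolding Cn_def using nn zo by auto
  moreover have "sum p V = 1"
    using c_props(3) wsum(1) by (simp add: p sum.distrib sum_divide_distrib[symmetric])
  moreover have "\<exists>v\<in>V. p v = 0"
  proof -
    obtain v where v: "v \<in> V" "Mx w = - w v / c v" using Mx_in by blast
    then have "w v = - Mx w * c v" using c_props(2)[OF v(1)] by (simp add: field_simps)
    then have "p v = 0" using M by (simp add: p)
    then show ?thesis using v(1) by blast
  qed
  ultimately show ?thesis unfolding Ycal_def p_def by blast
qed

lemma Pp_nrm_pos:
  assumes p: "p \<in> Ycal" shows "nrm (Pp p) > 0"
proof -
  have pC: "p \<in> Cn" "sum p V = 1" and pz: "\<exists>v\<in>V. p v = 0" using p by (auto simp: Ycal_def)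
  have uL: "(\<lambda>v. p v - c v) \<in> L0" by (rule Cn_diff_L0[OF pC])
  have "(\<Sum>i\<le>nF. (Pp p i)^2) \<noteq> 0"
  proof
    assume "(\<Sum>i\<le>nF. (Pp p i)^2) = 0"
    then have "\<forall>i\<in>{..nF}. (Pp p i)^2 = 0" by (subst sum_nonneg_eq_0_iff[symmetric]) auto
    then have zF: "p f - c f = 0" if "f \<in> F" for f
      using idx_surj[OF that] by (auto simp: Pp_def)
    obtain v where v: "v \<in> V" "p v = 0" using pz by blast
    have "p v - c v = 0" using L0_zero[OF uL] zF by blast
    then show False using v c_props(2)[OF v(1)] by simp
  qed
  moreover have "(\<Sum>i\<le>nF. (Pp p i)^2) \<ge> 0" by (intro sum_nonneg) auto
  ultimately show ?thesis unfolding nrm_def by simp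
qed

lemma fromY_in: assumes p: "p \<in> Ycal" shows "fromY p \<in> Sph"
proof -
  have s: "nrm (Pp p) > 0" by (rule Pp_nrm_pos[OF p])
  have sq: "(nrm (Pp p))^2 = (\<Sum>i\<le>nF. (Pp p i)^2)"
    unfolding nrm_def by (rule real_sqrt_pow2) (intro sum_nonneg, auto)
  have "(\<Sum>i\<le>nF. (fromY p i)^2) = (\<Sum>i\<le>nF. (Pp p i)^2) / (nrm (Pp p))^2"
    by (simp add: fromY_def power_divide sum_divide_distrib)
  also have "\<dots> = 1" using s by (simp add: sq[symmetric])
  finally show ?thesis by (simp add: Sph_def fromY_def Pp_def)
qed

lemma from_to: assumes z: "z \<in> Sph" shows "fromY (toY z) = z"
proof
  fix i
  define M where "M = Mx (E z)"
  have "\<exists>j\<le>nF. z j \<noteq> 0"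
  proof (rule ccontr)
    assume "\<not> (\<exists>j\<le>nF. z j \<noteq> 0)"
    then have "(\<Sum>i\<le>nF. (z i)^2) = 0" by simp
    then show False using z by (simp add: Sph_def)
  qed
  then obtain j where j: "j \<le> nF" "z j \<noteq> 0" by blast
  have Mp: "M > 0" unfolding M_def by (rule Mx_pos[of "E z" "idx j", OF E_L0]) (use E_idx[OF j(1)] j(2) in simp)
  have P: "Pp (toY z) i = (if i \<le> nF then z i / M else 0)" for i
    by (simp add: Pp_def toY_def E_idx M_def)
  have "(\<Sum>i\<le>nF. (Pp (toY z) i)^2) = (\<Sum>i\<le>nF. (z i)^2) / M^2"
    by (simp add: P power_divide sum_divide_distrib)
  also have "\<dots> = 1 / M^2" using z by (simp add: Sph_def)
  finally have "nrm (Pp (toY z)) = 1 / M"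
    unfolding nrm_def using Mp by (simp add: real_sqrt_divide)
  then show "fromY (toY z) i = z i"
    using Mp z by (auto simp: fromY_def P Sph_def)
qed

lemma to_from: assumes p: "p \<in> Ycal" shows "toY (fromY p) = p"
proof
  fix v
  have pC: "p \<in> Cn" "sum p V = 1" and pz: "\<exists>v\<in>V. p v = 0" using p by (auto simp: Ycal_def)
  define u where "u v = p v - c v" for v
  have uL: "u \<in> L0" unfolding u_def by (rule Cn_diff_L0[OF pC])
  define s where "s = nrm (Pp p)"
  have s: "s > 0" unfolding s_def by (rule Pp_nrm_pos[OF p])
  have Ez: "E (fromY p) w = u w / s" for w
  proof -
    have "E (fromY p) w = (\<Sum>i\<le>nF. u (idx i) * e (idx i) w) / s"
      by (simp add: E_def fromY_def Pp_def u_def s_def sum_divide_distrib)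
    also have "(\<Sum>i\<le>nF. u (idx i) * e (idx i) w) = u w"
      using E_of[OF uL] by (simp add: E_def fun_eq_iff)
    finally show ?thesis .
  qed
  have Mu: "Mx u = 1"
  proof -
    obtain v0 where v0: "v0 \<in> V" "p v0 = 0" using pz by blast
    have "Max ((\<lambda>v. - u v / c v) ` V) = 1"
    proof (rule Max_eqI[OF finite_img(1)])
      fix y assume "y \<in> (\<lambda>v. - u v / c v) ` V"
      then obtain v where v: "v \<in> V" "y = - u v / c v" by blast
      have "- u v \<le> c v" using Cn_nonneg[OF pC(1), of v] by (simp add: u_def)
      then have "- u v / c v \<le> 1" by (subst pos_divide_le_eq[OF c_props(2)[OF v(1)]]) simp
      then show "y \<le> 1" using v(2) by simp
    next
      show "1 \<in> (\<lambda>v. - u v / c v) ` V"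
        using v0 c_props(2)[OF v0(1)] by (intro image_eqI[of _ _ v0]) (auto simp: u_def)
    qed
    then show ?thesis by (simp add: Mx_def)
  qed
  have "Mx (E (fromY p)) = 1 / s"
  proof -
    have "E (fromY p) = (\<lambda>w. u w / s)" using Ez by auto
    then show ?thesis using Mx_scale[OF s, of u] Mu by simp
  qed
  then show "toY (fromY p) v = p v"
    using s by (simp add: toY_def Ez u_def)
qed

lemma toY_cont: "continuous_map (nsphere nF) (subtopology (powertop_real UNIV) Ycal) toY"
  unfolding continuous_map_in_subtopology
proof
  show "continuous_map (nsphere nF) (powertop_real UNIV) toY"
    unfolding continuous_map_componentwise_UNIV
  proof
    fix v
    have cE: "continuous_map (nsphere nF) euclideanreal (\<lambda>z. E z w)" for w
      unfolding E_def
      by (intro continuous_map_sum continuous_map_real_mult continuous_map_nsphere_projection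
          continuous_map_canonical_const) auto
    have cM: "continuous_map (nsphere nF) euclideanreal (\<lambda>z. Mx (E z))"
      unfolding Mx_def
      by (rule continuous_map_Max[OF finV V_ne])
        (intro continuous_map_real_divide continuous_map_minus cE continuous_map_canonical_const,
         use c_props(2) in force)
    have nz: "Mx (E z) \<noteq> 0" if "z \<in> topspace (nsphere nF)" for z
    proof -
      have zS: "z \<in> Sph" using that topspace_nsphere_Sph by simp
      have "\<exists>j\<le>nF. z j \<noteq> 0"
      proof (rule ccontr)
        assume "\<not> (\<exists>j\<le>nF. z j \<noteq> 0)"
        then have "(\<Sum>i\<le>nF. (z i)^2) = 0" by simp
        then show False using zS by (simp add: Sph_def)
      qed
      then obtain j where j: "j \<le> nF" "z j \<noteq> 0" by blast
      have "Mx (E z) > 0" by (rule Mx_pos[of "E z" "idx j", OF E_L0]) (use E_idx[OF j(1)] j(2) in simp)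
      then show ?thesis by simp
    qed
    show "continuous_map (nsphere nF) euclideanreal (\<lambda>z. toY z v)"
      unfolding toY_def
      by (intro continuous_map_add continuous_map_canonical_const continuous_map_real_divide cE cM nz)
  qed
  show "toY \<in> topspace (nsphere nF) \<rightarrow> Ycal"
    using toY_in topspace_nsphere_Sph by auto
qed

lemma fromY_cont: "continuous_map (subtopology (powertop_real UNIV) Ycal) (nsphere nF) fromY"
proof -
  let ?Y = "subtopology (powertop_real UNIV) Ycal"
  have "continuous_map ?Y (powertop_real UNIV) fromY"
    unfolding continuous_map_componentwise_UNIV
  proof
    fix i
    have nrm_eq: "nrm (Pp p) = sqrt (\<Sum>j\<le>nF. (p (idx j) - c (idx j))^2)" for p
      unfolding nrm_def Pp_def by (intro arg_cong[where f=sqrt] sum.cong) auto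
    have cn: "continuous_map ?Y euclideanreal (\<lambda>p. nrm (Pp p))"
      unfolding nrm_eq
      by (intro continuous_map_sqrt continuous_map_sum continuous_map_real_pow continuous_map_diff
          cproj_sub continuous_map_canonical_const) auto
    have nz: "nrm (Pp p) \<noteq> 0" if "p \<in> topspace ?Y" for p
      using Pp_nrm_pos[of p] that by simp
    show "continuous_map ?Y euclideanreal (\<lambda>p. fromY p i)"
    proof (cases "i \<le> nF")
      case True
      then show ?thesis unfolding fromY_def Pp_def
        by (simp, intro continuous_map_real_divide continuous_map_diff cproj_sub
            continuous_map_canonical_const cn[unfolded Pp_def] nz[unfolded Pp_def])
    next
      case False
      then show ?thesis by (simp add: fromY_def Pp_def)
    qed
  qed
  moreover have "fromY \<in> topspace ?Y \<rightarrow> Sph" using fromY_in by auto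
  ultimately show ?thesis
    unfolding nsphere Sph_def[symmetric] continuous_map_in_subtopology by (simp add: Sph_def)
qed

lemma Y_homeo_sphere: "subtopology (powertop_real UNIV) Ycal homeomorphic_space nsphere nF"
proof -
  have "homeomorphic_maps (nsphere nF) (subtopology (powertop_real UNIV) Ycal) toY fromY"
    unfolding homeomorphic_maps_def
    using toY_cont fromY_cont from_to to_from topspace_nsphere_Sph by auto
  then show ?thesis using homeomorphic_maps_imp_homeomorphic_space homeomorphic_space_sym by blast
qed

end

end

theorem theorem2:
  fixes V :: "(real ^ 'd) set" and r :: "real ^ 'd" and m k :: nat
  assumes "finite V" and "card V = m"
    and "weakly_balanced_poset V r \<noteq> {}"
    and "r \<in> rel_interior (convex hull V)"
    and "aff_dim (convex hull V) = int k"
  shows "order_complex_realization (weakly_balanced_poset V r)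
           homotopy_equivalent_space order_complex_realization (balanced_poset V r)
       \<and> order_complex_realization (balanced_poset V r)
           homotopy_equivalent_space nsphere (m - k - 2)"
proof -
  interpret bal2 V r
    by unfold_locales (use assms in auto)
  have Fne: "F \<noteq> {}" by (rule F_ne[OF assms(3)])
  have "int (card A) = aff_dim A + 1" using aff_dim_affine_independent[OF A_props(2)] by simp
  also have "aff_dim A = aff_dim (affine hull A)" by simp
  also have "\<dots> = aff_dim (affine hull V)" by (simp only: A_props(3))
  also have "\<dots> = int k" using assms(5) by (simp add: aff_dim_convex_hull)
  finally have cA: "card A = k + 1" by simp
  have cF: "card F = m - (k + 1)"
    unfolding F_def using card_Diff_subset[OF finA A_props(1)] cA assms(2) by simp
  have nFeq: "nF = m - k - 2" unfolding nF_def cF by simp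
  have "order_complex_realization (balanced_poset V r) homeomorphic_space subtopology (powertop_real UNIV) Ycal"
    unfolding ocr_eq by (rule homeomorphic_map_imp_homeomorphic_space[OF Phi_homeo])
  also have "\<dots> homeomorphic_space nsphere nF" by (rule Y_homeo_sphere[OF Fne])
  finally have "order_complex_realization (balanced_poset V r) homotopy_equivalent_space nsphere (m - k - 2)"
    unfolding nFeq by (rule homeomorphic_imp_homotopy_equivalent_space)
  then show ?thesis using WB_equiv_BB by blast
qed

end
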